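(* Let $d\ge1$, $D>0$, $\sigma\ge0$, $\alpha\in[0,1)$, $\rho>0$, and let $T$ be an even positive integer. Let $w^*\in\mathbb{R}^d$ with $\|w^*\|\le D$, and let $(x,\epsilon,b)$ be mutually independent random variables with $x\in\mathbb{R}^d$, $\|x\|\le1$ a.s., $\Sigma:=\mathbb{E}[(x-\mathbb{E}x)(x-\mathbb{E}x)^T]\succeq\rho I$, $\epsilon\in\mathbb{R}$, $|\epsilon|\le\sigma$ a.s., $\mathbb{E}\epsilon=0$, $b\in\mathbb{R}$, $\mathbb{P}(b\ne0)=\alpha$; set $y=\langle w^*,x\rangle+\epsilon+b$. Let $R=6D+\sigma$, $\lambda=(1-\alpha)\rho$, and let $\bar w$ be the output of the following algorithm (which is given $\mathbb{E}[x]$): set $w_1=0$; for $t=1,\dots,T$, draw a fresh independent sample $(x_t,y_t)$ distributed as $(x,y)$, set $\eta_t=\frac{1}{\lambda t}$, $g_t=\phi_R(\langle w_t,x_t-\mathbb{E}x\rangle-y_t)\,(x_t-\mathbb{E}x)$, $w_{t+1}=\Pi_{\mathcal W}(w_t-\eta_t g_t)$; output $\bar w=\frac2T\sum_{t=T/2+1}^{T}w_t$. Then $$\mathbb{E}\|\bar w-w^*\|^2\le\frac{72R^2}{((1-\alpha)\rho)^2\,T}.$$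
   Context: $\mathcal W=\{w\in\mathbb{R}^d:\|w\|\le D\}$, $\Pi_{\mathcal W}$ is the Euclidean projection onto $\mathcal W$, and $\phi_R(s)=\min\{R,\max\{s,-R\}\}$ (the derivative of the Huber loss $h_R(s)=\frac12s^2$ for $|s|\le R$, $R(|s|-\frac12R)$ otherwise). The expectation is over the samples drawn by the algorithm. *)

theory Defs
  imports "HOL-Probability.Probability"
begin

text \<open>Derivative of the Huber loss: clipping to [-R, R].\<close>
definition huber_phi :: "real \<Rightarrow> real \<Rightarrow> real" where
  "huber_phi R s = min R (max s (- R))"

definition proj_ball :: "real \<Rightarrow> 'a::euclidean_space \<Rightarrow> 'a" where
  "proj_ball D w = closest_point (cball 0 D) w"

text \<open>sgd_it lam R D mu xs ys k is the iterate w_(k+1) of the algorithm: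
  w_1 = 0 and w_(t+1) = Proj(w_t - eta_t g_t), eta_t = 1/(lam t),
  g_t = phi_R(<w_t, x_t - mu> - y_t) (x_t - mu).\<close>
primrec sgd_it :: "real \<Rightarrow> real \<Rightarrow> real \<Rightarrow> 'a::euclidean_space \<Rightarrow> (nat \<Rightarrow> 'a) \<Rightarrow> (nat \<Rightarrow> real)
    \<Rightarrow> nat \<Rightarrow> 'a" where
  "sgd_it lam R D mu xs ys 0 = 0"
| "sgd_it lam R D mu xs ys (Suc k) =
     (let t = Suc k; wt = sgd_it lam R D mu xs ys k;
          g = huber_phi R (inner wt (xs t - mu) - ys t) *\<^sub>R (xs t - mu)
      in proj_ball D (wt - (1 / (lam * real t)) *\<^sub>R g))"

definition sgd_w :: "real \<Rightarrow> real \<Rightarrow> real \<Rightarrow> 'a::euclidean_space \<Rightarrow> (nat \<Rightarrow> 'a) \<Rightarrow> (nat \<Rightarrow> real)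
    \<Rightarrow> nat \<Rightarrow> 'a" where
  "sgd_w lam R D mu xs ys t = sgd_it lam R D mu xs ys (t - 1)"

definition sgd_avg :: "real \<Rightarrow> real \<Rightarrow> real \<Rightarrow> 'a::euclidean_space \<Rightarrow> (nat \<Rightarrow> 'a) \<Rightarrow> (nat \<Rightarrow> real)
    \<Rightarrow> nat \<Rightarrow> 'a" where
  "sgd_avg lam R D mu xs ys T =
     (2 / real T) *\<^sub>R (\<Sum>t\<in>{T div 2 + 1..T}. sgd_w lam R D mu xs ys t)"

end

theory Submission
  imports Defs
begin


lemma distr_pair_snd':
  assumes "prob_space M" "prob_space N"
  shows "distr (M \<Otimes>\<^sub>M N) N snd = N"
proof (intro measure_eqI)
  fix A assume A: "A \<in> sets (distr (M \<Otimes>\<^sub>M N) N snd)"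
  from A have "emeasure (distr (M \<Otimes>\<^sub>M N) N snd) A = emeasure (M \<Otimes>\<^sub>M N) (space M \<times> A)"
    by (auto simp add: emeasure_distr space_pair_measure dest: sets.sets_into_space intro!: arg_cong2[where f=emeasure])
  with A assms show "emeasure (distr (M \<Otimes>\<^sub>M N) N snd) A = emeasure N A"
    by (simp add: sigma_finite_measure.emeasure_pair_measure_Times[OF prob_space_imp_sigma_finite[OF assms(2)]] prob_space.emeasure_space_1)
qed simp

lemma sq_exp: "(norm (v - c *\<^sub>R g))\<^sup>2 = (norm v)\<^sup>2 - 2 * c * inner g v + c\<^sup>2 * (norm g)\<^sup>2"
  unfolding power2_norm_eq_inner
  by (simp add: inner_diff_left inner_diff_right inner_commute power2_eq_square algebra_simps)

lemma aux1: "(l::real) \<noteq> 0 \<Longrightarrow> 1 - 2 * (1 / (l * n)) * l = 1 - 2 / n"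
  by (cases "n = 0") (simp_all add: field_simps)

lemma aux2: "m > 0 \<Longrightarrow> (l::real) \<noteq> 0 \<Longrightarrow> 2 * (4 * r / l) / real m = 16 * r / (l * real (2 * m))"
  by (simp add: field_simps)
lemma aux3: "(r::real) \<ge> 0 \<Longrightarrow> 0 \<le> d \<Longrightarrow> 16 * r / d \<le> 72 * r / d"
  by (simp add: divide_right_mono)
lemma aux4: "(x::real) \<ge> m \<Longrightarrow> m > 0 \<Longrightarrow> g \<ge> 0 \<Longrightarrow> 2 * g / x \<le> 2 * g / m"
  by (simp add: divide_left_mono)
lemma aux5: "card S = m \<Longrightarrow> m \<ge> 1 \<Longrightarrow> (1 / real m) * (real (card S) * (c::real)) = c"
  by simp

lemma aux6:
  fixes n G :: real
  assumes n2: "n \<ge> 2" and G0: "G \<ge> 0"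
  shows "(1 - 2 / n) * (2 * G / n) + G / n\<^sup>2 \<le> 2 * G / (n + 1)"
proof -
  have e: "(1 - 2 / n) * (2 * G / n) + G / n\<^sup>2 = (2 * n - 3) * G / n\<^sup>2"
    using n2 by (simp add: field_simps power2_eq_square)
  have "(2 * n - 3) * (n + 1) \<le> 2 * n\<^sup>2" using n2 by (simp add: power2_eq_square algebra_simps)
  from mult_left_mono[OF this G0] have "(2 * n - 3) * G * (n + 1) \<le> 2 * G * n\<^sup>2" by (simp add: algebra_simps)
  then have "(2 * n - 3) * G / n\<^sup>2 \<le> 2 * G / (n + 1)" using n2 by (simp add: field_simps)
  then show ?thesis using e by simp
qed

lemma huber_bound: "R \<ge> 0 \<Longrightarrow> \<bar>huber_phi R s\<bar> \<le> R"
  by (auto simp: huber_phi_def)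
lemma huber_mono: "(huber_phi R a - huber_phi R c) * (a - c) \<ge> 0"
  unfolding huber_phi_def
  by (cases "a \<le> c") (auto simp: mult_nonneg_nonneg mult_nonpos_nonpos min_def max_def)
lemma huber_id: "\<bar>a\<bar> \<le> R \<Longrightarrow> huber_phi R a = a"
  by (auto simp: huber_phi_def)
lemma proj_ball_in: "D \<ge> 0 \<Longrightarrow> norm (proj_ball D w) \<le> D"
  unfolding proj_ball_def using closest_point_in_set[of "cball 0 D" w] by auto
lemma proj_ball_lip: "D \<ge> 0 \<Longrightarrow> norm u \<le> D \<Longrightarrow> norm (proj_ball D w - u) \<le> norm (w - u)"
  unfolding proj_ball_def
  using closest_point_lipschitz[of "cball 0 D" w u] closest_point_self[of u "cball 0 D"]
  by (auto simp: dist_norm)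
lemma proj_ball_meas[measurable]: "D \<ge> 0 \<Longrightarrow> proj_ball D \<in> borel_measurable borel"
  unfolding proj_ball_def
  by (rule borel_measurable_continuous_onI, rule continuous_on_closest_point) auto

locale sgd_setup =
  fixes Px :: "'a::euclidean_space measure" and Pe Pb :: "real measure"
    and D \<sigma> \<alpha> \<rho> :: real and wstar :: 'a
  assumes Px: "prob_space Px" and Pe: "prob_space Pe" and Pb: "prob_space Pb"
    and sPx: "sets Px = sets borel" and sPe: "sets Pe = sets borel" and sPb: "sets Pb = sets borel"
    and Dpos: "D > 0" and sig: "\<sigma> \<ge> 0" and al0: "0 \<le> \<alpha>" and al1: "\<alpha> < 1" and rho: "\<rho> > 0"
    and wst: "norm wstar \<le> D"
    and xb: "AE x in Px. norm x \<le> 1"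
    and var: "\<forall>v::'a. (\<integral>x. (inner v (x - (\<integral>z. z \<partial>Px)))\<^sup>2 \<partial>Px) \<ge> \<rho> * (norm v)\<^sup>2"
    and eb: "AE e in Pe. \<bar>e\<bar> \<le> \<sigma>"
    and bal: "measure Pb {b. b \<noteq> 0} = \<alpha>"
begin

abbreviation "Q \<equiv> Px \<Otimes>\<^sub>M (Pe \<Otimes>\<^sub>M Pb)"
abbreviation "mu \<equiv> (\<integral>z. z \<partial>Px)"
abbreviation "R \<equiv> 6 * D + \<sigma>"
abbreviation "lam \<equiv> (1 - \<alpha>) * \<rho>"

lemma Peb: "prob_space (Pe \<Otimes>\<^sub>M Pb)"
  by (intro prob_space_pair Pe Pb)
lemma PQ_prob: "prob_space Q"
  by (intro prob_space_pair Px Peb)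

sublocale PX: prob_space Px by (rule Px)
sublocale PQ: prob_space Q by (rule PQ_prob)
sublocale PEB: prob_space "Pe \<Otimes>\<^sub>M Pb" by (rule Peb)
sublocale PB: prob_space Pb by (rule Pb)

lemma mfst_Px: "fst \<in> measurable Q Px" by simp
lemma mfst[measurable]: "(\<lambda>\<xi>. fst \<xi>) \<in> borel_measurable Q"
  using mfst_Px by (simp add: measurable_cong_sets[OF refl sPx])
lemma msnd_eb: "snd \<in> measurable Q (Pe \<Otimes>\<^sub>M Pb)" by simp
lemma me[measurable]: "(\<lambda>\<xi>. fst (snd \<xi>)) \<in> borel_measurable Q"
proof -
  have "fst \<in> measurable (Pe \<Otimes>\<^sub>M Pb) Pe" by simp
  then have "fst \<in> borel_measurable (Pe \<Otimes>\<^sub>M Pb)" by (simp add: measurable_cong_sets[OF refl sPe])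
  from measurable_compose[OF msnd_eb this] show ?thesis .
qed
lemma mb[measurable]: "(\<lambda>\<xi>. snd (snd \<xi>)) \<in> borel_measurable Q"
proof -
  have "snd \<in> measurable (Pe \<Otimes>\<^sub>M Pb) Pb" by simp
  then have "snd \<in> borel_measurable (Pe \<Otimes>\<^sub>M Pb)" by (simp add: measurable_cong_sets[OF refl sPb])
  from measurable_compose[OF msnd_eb this] show ?thesis .
qed

lemma distrQ1: "distr Q Px fst = Px"
  by (rule prob_space.distr_pair_fst[OF Peb])
lemma distrQ2: "distr Q (Pe \<Otimes>\<^sub>M Pb) snd = Pe \<Otimes>\<^sub>M Pb"
  by (rule distr_pair_snd'[OF Px Peb])

lemma AE_Q_fst: assumes "AE x in Px. P x" shows "AE \<xi> in Q. P (fst \<xi>)"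
  by (rule AE_distrD[OF mfst_Px]) (subst distrQ1, rule assms)

lemma AE_Q_e: assumes "AE x in Pe. P x" shows "AE \<xi> in Q. P (fst (snd \<xi>))"
proof -
  have "AE p in Pe \<Otimes>\<^sub>M Pb. P (fst p)"
    by (rule AE_distrD[of fst _ Pe]) (simp, subst prob_space.distr_pair_fst[OF Pb], rule assms)
  note h = this
  show ?thesis
    apply (rule AE_distrD[OF msnd_eb, where P="\<lambda>p. P (fst p)"])
    apply (subst distrQ2) by (rule h)
qed

lemma integral_Q_fst:
  fixes f :: "'a \<Rightarrow> 'b::{banach,second_countable_topology}"
  assumes "f \<in> borel_measurable borel"
  shows "(\<integral>\<xi>. f (fst \<xi>) \<partial>Q) = (\<integral>x. f x \<partial>Px)"
proof -
  have fm: "f \<in> borel_measurable Px" using assms by (simp add: measurable_cong_sets[OF sPx refl])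
  have "(\<integral>x. f x \<partial>Px) = (\<integral>x. f x \<partial>distr Q Px fst)" by (simp add: distrQ1)
  also have "\<dots> = (\<integral>\<xi>. f (fst \<xi>) \<partial>Q)"
    by (rule integral_distr[OF mfst_Px fm])
  finally show ?thesis by simp
qed

lemma integrable_Px_bound:
  fixes f :: "'a \<Rightarrow> real"
  assumes "f \<in> borel_measurable borel" "AE x in Px. \<bar>f x\<bar> \<le> B"
  shows "integrable Px f"
  using assms by (intro PX.integrable_const_bound[where B=B])
    (auto simp: measurable_cong_sets[OF sPx refl])

lemma mu_bound: "norm mu \<le> 1"
proof -
  have i: "integrable Px (\<lambda>x. x)"
    by (intro PX.integrable_const_bound[where B=1] xb)
      (simp add: measurable_cong_sets[OF sPx refl])
  have "norm mu \<le> (\<integral>x. norm x \<partial>Px)" by (rule integral_norm_bound)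
  also have "\<dots> \<le> (\<integral>x. 1 \<partial>Px)"
    by (rule integral_mono_AE) (use i xb in auto)
  also have "\<dots> = 1" using PX.prob_space by simp
  finally show ?thesis .
qed


lemma integrable_x: "integrable Px (\<lambda>x. x)"
  by (intro PX.integrable_const_bound[where B=1] xb) (simp add: measurable_cong_sets[OF sPx refl])

lemma mfst2[measurable]: "(\<lambda>p. fst p) \<in> borel_measurable (Pe \<Otimes>\<^sub>M Pb)"
proof -
  have "fst \<in> measurable (Pe \<Otimes>\<^sub>M Pb) Pe" by simp
  then show ?thesis by (simp add: measurable_cong_sets[OF refl sPe])
qed
lemma msnd2[measurable]: "(\<lambda>p. snd p) \<in> borel_measurable (Pe \<Otimes>\<^sub>M Pb)"
proof -
  have "snd \<in> measurable (Pe \<Otimes>\<^sub>M Pb) Pb" by simp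
  then show ?thesis by (simp add: measurable_cong_sets[OF refl sPb])
qed

lemma integral_eb_snd:
  fixes f :: "real \<Rightarrow> real"
  assumes "f \<in> borel_measurable borel"
  shows "(\<integral>p. f (snd p) \<partial>(Pe \<Otimes>\<^sub>M Pb)) = (\<integral>x. f x \<partial>Pb)"
proof -
  have fm: "f \<in> borel_measurable Pb" using assms by (simp add: measurable_cong_sets[OF sPb refl])
  have "(\<integral>x. f x \<partial>Pb) = (\<integral>x. f x \<partial>distr (Pe \<Otimes>\<^sub>M Pb) Pb snd)" by (simp add: distr_pair_snd'[OF Pe Pb])
  also have "\<dots> = (\<integral>p. f (snd p) \<partial>(Pe \<Otimes>\<^sub>M Pb))"
    by (rule integral_distr) (simp_all add: fm)
  finally show ?thesis by simp
qed

lemma integral_Q_prod: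
  fixes f :: "'a \<Rightarrow> real" and k :: "real \<times> real \<Rightarrow> real"
  assumes "integrable Q (\<lambda>\<xi>. f (fst \<xi>) * k (snd \<xi>))"
  shows "(\<integral>\<xi>. f (fst \<xi>) * k (snd \<xi>) \<partial>Q) = (\<integral>x. f x \<partial>Px) * (\<integral>p. k p \<partial>(Pe \<Otimes>\<^sub>M Pb))"
proof -
  interpret P: pair_sigma_finite Px "Pe \<Otimes>\<^sub>M Pb"
    unfolding pair_sigma_finite_def
    by (simp add: PX.sigma_finite_measure_axioms PEB.sigma_finite_measure_axioms)
  have "(\<integral>\<xi>. f (fst \<xi>) * k (snd \<xi>) \<partial>Q) = (\<integral>x. (\<integral>y. f x * k y \<partial>(Pe \<Otimes>\<^sub>M Pb)) \<partial>Px)"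
    using P.integral_fst'[OF assms] by simp
  also have "\<dots> = (\<integral>x. f x \<partial>Px) * (\<integral>p. k p \<partial>(Pe \<Otimes>\<^sub>M Pb))" by simp
  finally show ?thesis .
qed

definition yv :: "'a \<times> real \<times> real \<Rightarrow> real" where
  "yv \<xi> = inner wstar (fst \<xi>) + fst (snd \<xi>) + snd (snd \<xi>)"
definition gr :: "'a \<Rightarrow> 'a \<times> real \<times> real \<Rightarrow> 'a" where
  "gr w \<xi> = huber_phi R (inner w (fst \<xi> - mu) - yv \<xi>) *\<^sub>R (fst \<xi> - mu)"

lemma gr_meas[measurable]: "gr w \<in> borel_measurable Q"
  unfolding gr_def yv_def huber_phi_def by measurable

lemma Rpos: "R \<ge> 0" using Dpos sig by simp

lemma AE_good: "AE \<xi> in Q. norm (fst \<xi>) \<le> 1 \<and> \<bar>fst (snd \<xi>)\<bar> \<le> \<sigma>"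
  using AE_Q_fst[OF xb] AE_Q_e[OF eb] by eventually_elim auto

lemma X_bound: "norm (fst \<xi>) \<le> 1 \<Longrightarrow> norm (fst \<xi> - mu) \<le> 2"
  using mu_bound norm_triangle_ineq4[of "fst \<xi>" mu] by simp

lemma gr_bound: "norm (fst \<xi>) \<le> 1 \<Longrightarrow> norm (gr w \<xi>) \<le> 2 * R"
proof -
  assume a: "norm (fst \<xi>) \<le> 1"
  have "norm (gr w \<xi>) = \<bar>huber_phi R (inner w (fst \<xi> - mu) - yv \<xi>)\<bar> * norm (fst \<xi> - mu)"
    unfolding gr_def by simp
  also have "\<dots> \<le> R * 2"
    by (rule mult_mono) (use huber_bound[OF Rpos] X_bound[OF a] Rpos in auto)
  finally show ?thesis by simp
qed

lemma grad_lower: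
  assumes w: "norm w \<le> D"
  shows "(\<integral>\<xi>. inner (gr w \<xi>) (w - wstar) \<partial>Q) \<ge> lam * (norm (w - wstar))\<^sup>2"
proof -
  define v where "v = w - wstar"
  have nv: "norm v \<le> 2 * D" unfolding v_def using w wst norm_triangle_ineq4[of w wstar] by simp
  define a where "a = (\<lambda>\<xi>::'a \<times> real \<times> real. inner v (fst \<xi> - mu))"
  define c where "c = (\<lambda>p::real \<times> real. - inner wstar mu - fst p - snd p)"
  define T1 where "T1 = (\<lambda>\<xi>. (huber_phi R (a \<xi> + c (snd \<xi>)) - huber_phi R (c (snd \<xi>))) * a \<xi>)"
  define T2 where "T2 = (\<lambda>\<xi>. inner v (fst \<xi> - mu) * huber_phi R (c (snd \<xi>)))"
  define J where "J = (\<lambda>\<xi>::'a \<times> real \<times> real. (inner v (fst \<xi> - mu))\<^sup>2 * indicator {0} (snd (snd \<xi>)) :: real)"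
  have am[measurable]: "a \<in> borel_measurable Q" unfolding a_def by measurable
  have cm[measurable]: "c \<in> borel_measurable (Pe \<Otimes>\<^sub>M Pb)" unfolding c_def by measurable
  have cm'[measurable]: "(\<lambda>\<xi>. c (snd \<xi>)) \<in> borel_measurable Q" unfolding c_def by measurable
  have ab: "\<bar>a \<xi>\<bar> \<le> 4 * D" if "norm (fst \<xi>) \<le> 1" for \<xi>
  proof -
    have "\<bar>a \<xi>\<bar> \<le> norm v * norm (fst \<xi> - mu)" unfolding a_def by (rule Cauchy_Schwarz_ineq2)
    also have "\<dots> \<le> (2 * D) * 2" by (rule mult_mono) (use nv X_bound[OF that] Dpos in auto)
    finally show ?thesis by simp
  qed
  have eq: "inner (gr w \<xi>) v = T1 \<xi> + T2 \<xi>" for \<xi>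
  proof -
    have "inner w (fst \<xi> - mu) - yv \<xi> = a \<xi> + c (snd \<xi>)"
      unfolding a_def c_def yv_def v_def by (simp add: inner_diff_left inner_diff_right)
    note h = this
    have ha: "a \<xi> = inner v (fst \<xi> - mu)" unfolding a_def by simp
    have "inner (gr w \<xi>) v = huber_phi R (a \<xi> + c (snd \<xi>)) * a \<xi>"
      unfolding gr_def h by (simp add: inner_commute ha)
    moreover have "T1 \<xi> + T2 \<xi> = huber_phi R (a \<xi> + c (snd \<xi>)) * a \<xi>"
      unfolding T1_def T2_def ha[symmetric] by (simp add: algebra_simps)
    ultimately show ?thesis by simp
  qed
  have T1m[measurable]: "T1 \<in> borel_measurable Q" unfolding T1_def huber_phi_def by measurable
  have T2m[measurable]: "T2 \<in> borel_measurable Q" unfolding T2_def huber_phi_def c_def by measurable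
  have Jm[measurable]: "J \<in> borel_measurable Q" unfolding J_def by measurable
  have iT1: "integrable Q T1"
  proof (rule PQ.integrable_const_bound[where B="2 * R * (4 * D)"])
    show "AE x in Q. norm (T1 x) \<le> 2 * R * (4 * D)"
      using AE_good
    proof eventually_elim
      case (elim \<xi>)
      have "\<bar>huber_phi R (a \<xi> + c (snd \<xi>)) - huber_phi R (c (snd \<xi>))\<bar> \<le> 2 * R"
        using huber_bound[OF Rpos, of "a \<xi> + c (snd \<xi>)"] huber_bound[OF Rpos, of "c (snd \<xi>)"] by (auto simp: abs_le_iff)
      then show ?case unfolding T1_def real_norm_def abs_mult
        by (intro mult_mono) (use ab[of \<xi>] elim Rpos in auto)
    qed
  qed simp
  have iT2: "integrable Q T2"
  proof (rule PQ.integrable_const_bound[where B="4 * D * R"])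
    show "AE x in Q. norm (T2 x) \<le> 4 * D * R"
      using AE_good
    proof eventually_elim
      case (elim \<xi>)
      then show ?case unfolding T2_def real_norm_def abs_mult
        by (intro mult_mono) (use ab[of \<xi>] elim Rpos huber_bound[OF Rpos] in \<open>auto simp: a_def\<close>)
    qed
  qed simp
  have iJ: "integrable Q J"
  proof (rule PQ.integrable_const_bound[where B="(4 * D)\<^sup>2"])
    show "AE x in Q. norm (J x) \<le> (4 * D)\<^sup>2"
      using AE_good
    proof eventually_elim
      case (elim \<xi>)
      have "\<bar>a \<xi>\<bar>\<^sup>2 \<le> (4 * D)\<^sup>2" by (rule power_mono) (use ab[of \<xi>] elim in auto)
      then show ?case unfolding J_def a_def by (auto simp: indicator_def)
    qed
  qed simp
  have "(\<integral>\<xi>. inner (gr w \<xi>) (w - wstar) \<partial>Q) = (\<integral>\<xi>. T1 \<xi> \<partial>Q) + (\<integral>\<xi>. T2 \<xi> \<partial>Q)"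
    unfolding v_def[symmetric] eq by (rule Bochner_Integration.integral_add[OF iT1 iT2])
  moreover have "(\<integral>\<xi>. T2 \<xi> \<partial>Q) = 0"
  proof -
    have "(\<integral>\<xi>. T2 \<xi> \<partial>Q) = (\<integral>x. inner v (x - mu) \<partial>Px) * (\<integral>p. huber_phi R (c p) \<partial>(Pe \<Otimes>\<^sub>M Pb))"
      unfolding T2_def by (rule integral_Q_prod) (use iT2 in \<open>simp add: T2_def\<close>)
    moreover have "(\<integral>x. inner v (x - mu) \<partial>Px) = 0"
    proof -
      have "(\<integral>x. inner v (x - mu) \<partial>Px) = (\<integral>x. inner v x - inner v mu \<partial>Px)"
        by (simp add: inner_diff_right)
      also have "\<dots> = (\<integral>x. inner v x \<partial>Px) - (\<integral>x. inner v mu \<partial>Px)"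
        by (rule Bochner_Integration.integral_diff) (use integrable_x in auto)
      also have "\<dots> = 0" using integrable_x PX.prob_space by simp
      finally show ?thesis .
    qed
    ultimately show ?thesis by simp
  qed
  moreover have "(\<integral>\<xi>. J \<xi> \<partial>Q) \<le> (\<integral>\<xi>. T1 \<xi> \<partial>Q)"
  proof (rule integral_mono_AE[OF iJ iT1])
    show "AE \<xi> in Q. J \<xi> \<le> T1 \<xi>"
      using AE_good
    proof eventually_elim
      case (elim \<xi>)
      show ?case
      proof (cases "snd (snd \<xi>) = 0")
        case True
        have "\<bar>inner wstar mu\<bar> \<le> D"
          using Cauchy_Schwarz_ineq2[of wstar mu] mult_mono[OF wst mu_bound] Dpos by simp
        then have c1: "\<bar>c (snd \<xi>)\<bar> \<le> D + \<sigma>" unfolding c_def using True elim by auto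
        have "\<bar>c (snd \<xi>)\<bar> \<le> R" using c1 Dpos by simp
        moreover have "\<bar>a \<xi> + c (snd \<xi>)\<bar> \<le> R" using c1 ab[of \<xi>] elim Dpos by simp
        ultimately have "T1 \<xi> = (a \<xi>)\<^sup>2" unfolding T1_def by (simp add: huber_id power2_eq_square)
        then show ?thesis unfolding J_def a_def using True by simp
      next
        case False
        have "0 \<le> T1 \<xi>" unfolding T1_def
          using huber_mono[of R "a \<xi> + c (snd \<xi>)" "c (snd \<xi>)"] by simp
        then show ?thesis unfolding J_def using False by simp
      qed
    qed
  qed
  moreover have "(\<integral>\<xi>. J \<xi> \<partial>Q) \<ge> lam * (norm v)\<^sup>2"
  proof -
    have "(\<integral>\<xi>. J \<xi> \<partial>Q) = (\<integral>x. (inner v (x - mu))\<^sup>2 \<partial>Px) * (\<integral>p. indicator {0} (snd p) \<partial>(Pe \<Otimes>\<^sub>M Pb))"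
      unfolding J_def by (rule integral_Q_prod) (use iJ in \<open>simp add: J_def\<close>)
    also have "(\<integral>p. indicator {0} (snd p) \<partial>(Pe \<Otimes>\<^sub>M Pb)) = (\<integral>b. indicator {0} b \<partial>Pb :: real)"
      using integral_eb_snd[of "indicator {0}"] by simp
    also have "\<dots> = 1 - \<alpha>"
    proof -
      have sp: "space Pb = UNIV" using sets_eq_imp_space_eq[OF sPb] by simp
      have "{b. b \<noteq> 0} = space Pb - {0}" using sp by auto
      then have "PB.prob (space Pb - {0}) = \<alpha>" using bal by simp
      moreover have "PB.prob (space Pb - {0}) = 1 - PB.prob {0}"
        by (rule PB.prob_compl) (simp add: sPb)
      ultimately show ?thesis using sp by simp
    qed
    finally have "(\<integral>\<xi>. J \<xi> \<partial>Q) = (\<integral>x. (inner v (x - mu))\<^sup>2 \<partial>Px) * (1 - \<alpha>)" .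
    moreover have "(\<integral>x. (inner v (x - mu))\<^sup>2 \<partial>Px) \<ge> \<rho> * (norm v)\<^sup>2" using var by blast
    ultimately show ?thesis using al1 by (simp add: mult.commute mult_right_mono)
  qed
  ultimately show ?thesis unfolding v_def by linarith
qed

lemma inner_step:
  assumes w: "norm w \<le> D" and eta: "\<eta> \<ge> 0"
  shows "(\<integral>\<xi>. (norm (proj_ball D (w - \<eta> *\<^sub>R gr w \<xi>) - wstar))\<^sup>2 \<partial>Q)
     \<le> (1 - 2 * \<eta> * lam) * (norm (w - wstar))\<^sup>2 + \<eta>\<^sup>2 * (4 * R\<^sup>2)"
proof -
  define v where "v = w - wstar"
  have iG2: "integrable Q (\<lambda>\<xi>. (norm (gr w \<xi>))\<^sup>2)"
  proof (rule PQ.integrable_const_bound[where B="(2 * R)\<^sup>2"])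
    show "AE x in Q. norm ((norm (gr w x))\<^sup>2) \<le> (2 * R)\<^sup>2"
      using AE_good
    proof eventually_elim
      case (elim \<xi>)
      then show ?case using power_mono[OF gr_bound[of \<xi> w]] by simp
    qed
  qed simp
  have iGv: "integrable Q (\<lambda>\<xi>. inner (gr w \<xi>) v)"
  proof (rule PQ.integrable_const_bound[where B="2 * R * norm v"])
    show "AE x in Q. norm (inner (gr w x) v) \<le> 2 * R * norm v"
      using AE_good
    proof eventually_elim
      case (elim \<xi>)
      have "\<bar>inner (gr w \<xi>) v\<bar> \<le> norm (gr w \<xi>) * norm v" by (rule Cauchy_Schwarz_ineq2)
      also have "\<dots> \<le> 2 * R * norm v" by (rule mult_right_mono) (use gr_bound[of \<xi> w] elim in auto)
      finally show ?case by simp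
    qed
  qed simp
  have pt: "(norm (w - \<eta> *\<^sub>R gr w \<xi> - wstar))\<^sup>2
      = (norm v)\<^sup>2 - 2 * \<eta> * inner (gr w \<xi>) v + \<eta>\<^sup>2 * (norm (gr w \<xi>))\<^sup>2" for \<xi>
  proof -
    have "w - \<eta> *\<^sub>R gr w \<xi> - wstar = v - \<eta> *\<^sub>R gr w \<xi>" unfolding v_def by simp
    note h = this
    show ?thesis unfolding h by (rule sq_exp)
  qed
  have iR: "integrable Q (\<lambda>\<xi>. (norm v)\<^sup>2 - 2 * \<eta> * inner (gr w \<xi>) v + \<eta>\<^sup>2 * (norm (gr w \<xi>))\<^sup>2)"
    using iG2 iGv by simp
  have "(\<integral>\<xi>. (norm (proj_ball D (w - \<eta> *\<^sub>R gr w \<xi>) - wstar))\<^sup>2 \<partial>Q)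
     \<le> (\<integral>\<xi>. (norm v)\<^sup>2 - 2 * \<eta> * inner (gr w \<xi>) v + \<eta>\<^sup>2 * (norm (gr w \<xi>))\<^sup>2 \<partial>Q)"
  proof (rule integral_mono'[OF iR])
    fix \<xi>
    show "0 \<le> (norm v)\<^sup>2 - 2 * \<eta> * inner (gr w \<xi>) v + \<eta>\<^sup>2 * (norm (gr w \<xi>))\<^sup>2"
      using pt[of \<xi>] by (metis zero_le_power2)
    have "norm (proj_ball D (w - \<eta> *\<^sub>R gr w \<xi>) - wstar) \<le> norm (w - \<eta> *\<^sub>R gr w \<xi> - wstar)"
      by (rule proj_ball_lip) (use Dpos wst in auto)
    then have "(norm (proj_ball D (w - \<eta> *\<^sub>R gr w \<xi>) - wstar))\<^sup>2 \<le> (norm (w - \<eta> *\<^sub>R gr w \<xi> - wstar))\<^sup>2"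
      by (rule power_mono) simp
    then show "(norm (proj_ball D (w - \<eta> *\<^sub>R gr w \<xi>) - wstar))\<^sup>2
       \<le> (norm v)\<^sup>2 - 2 * \<eta> * inner (gr w \<xi>) v + \<eta>\<^sup>2 * (norm (gr w \<xi>))\<^sup>2"
      using pt[of \<xi>] by simp
  qed
  also have "\<dots> = (norm v)\<^sup>2 - 2 * \<eta> * (\<integral>\<xi>. inner (gr w \<xi>) v \<partial>Q) + \<eta>\<^sup>2 * (\<integral>\<xi>. (norm (gr w \<xi>))\<^sup>2 \<partial>Q)"
  proof -
    have "(\<integral>\<xi>. (norm v)\<^sup>2 - 2 * \<eta> * inner (gr w \<xi>) v + \<eta>\<^sup>2 * (norm (gr w \<xi>))\<^sup>2 \<partial>Q)
      = (\<integral>\<xi>. (norm v)\<^sup>2 - 2 * \<eta> * inner (gr w \<xi>) v \<partial>Q) + (\<integral>\<xi>. \<eta>\<^sup>2 * (norm (gr w \<xi>))\<^sup>2 \<partial>Q)"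
      by (rule Bochner_Integration.integral_add) (use iG2 iGv in auto)
    also have "(\<integral>\<xi>. (norm v)\<^sup>2 - 2 * \<eta> * inner (gr w \<xi>) v \<partial>Q)
       = (\<integral>\<xi>. (norm v)\<^sup>2 \<partial>Q) - (\<integral>\<xi>. 2 * \<eta> * inner (gr w \<xi>) v \<partial>Q)"
      by (rule Bochner_Integration.integral_diff) (use iGv in auto)
    finally show ?thesis using PQ.prob_space by simp
  qed
  also have "\<dots> \<le> (norm v)\<^sup>2 - 2 * \<eta> * (lam * (norm v)\<^sup>2) + \<eta>\<^sup>2 * (4 * R\<^sup>2)"
  proof -
    have "(\<integral>\<xi>. (norm (gr w \<xi>))\<^sup>2 \<partial>Q) \<le> (\<integral>\<xi>. (2 * R)\<^sup>2 \<partial>Q)"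
    proof (rule integral_mono_AE[OF iG2])
      show "AE \<xi> in Q. (norm (gr w \<xi>))\<^sup>2 \<le> (2 * R)\<^sup>2"
        using AE_good
      proof eventually_elim
        case (elim \<xi>)
        then show ?case using power_mono[OF gr_bound[of \<xi> w]] by simp
      qed
    qed simp
    then have a: "(\<integral>\<xi>. (norm (gr w \<xi>))\<^sup>2 \<partial>Q) \<le> 4 * R\<^sup>2" using PQ.prob_space by (simp add: power2_eq_square algebra_simps)
    have b: "(\<integral>\<xi>. inner (gr w \<xi>) v \<partial>Q) \<ge> lam * (norm v)\<^sup>2" using grad_lower[OF w] unfolding v_def .
    have "2 * \<eta> * (lam * (norm v)\<^sup>2) \<le> 2 * \<eta> * (\<integral>\<xi>. inner (gr w \<xi>) v \<partial>Q)"
      by (rule mult_left_mono[OF b]) (use eta in simp)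
    moreover have "\<eta>\<^sup>2 * (\<integral>\<xi>. (norm (gr w \<xi>))\<^sup>2 \<partial>Q) \<le> \<eta>\<^sup>2 * (4 * R\<^sup>2)"
      by (rule mult_left_mono[OF a]) simp
    ultimately show ?thesis by linarith
  qed
  also have "\<dots> = (1 - 2 * \<eta> * lam) * (norm (w - wstar))\<^sup>2 + \<eta>\<^sup>2 * (4 * R\<^sup>2)"
    unfolding v_def by (simp add: algebra_simps)
  finally show ?thesis .
qed

lemma PiQ_prob: "prob_space (PiM I (\<lambda>_. Q))"
  by (rule prob_space_PiM) (simp add: PQ_prob)

lemma PiQ_int_bound:
  fixes f :: "_ \<Rightarrow> real"
  assumes "f \<in> borel_measurable (PiM I (\<lambda>_. Q))" "\<And>x. \<bar>f x\<bar> \<le> B"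
  shows "integrable (PiM I (\<lambda>_. Q)) f"
  using assms
  by (intro finite_measure.integrable_const_bound[where B=B] prob_space.finite_measure PiQ_prob) auto

lemma insert_split:
  fixes f :: "_ \<Rightarrow> real"
  fixes I :: "nat set"
  assumes fin: "finite I" and i: "i \<notin> I"
    and fm: "f \<in> borel_measurable (PiM (insert i I) (\<lambda>_. Q))" and fb: "\<And>x. \<bar>f x\<bar> \<le> B"
  shows "integral\<^sup>L (PiM (insert i I) (\<lambda>_. Q)) f = (\<integral>x. (\<integral>y. f (x(i:=y)) \<partial>Q) \<partial>PiM I (\<lambda>_. Q))"
    and "integrable (PiM I (\<lambda>_. Q)) (\<lambda>x. \<integral>y. f (x(i:=y)) \<partial>Q)"
proof -
  interpret PS: product_sigma_finite "\<lambda>_::nat. Q"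
    by (simp add: product_sigma_finite_def PQ.sigma_finite_measure_axioms)
  show "integral\<^sup>L (PiM (insert i I) (\<lambda>_. Q)) f = (\<integral>x. (\<integral>y. f (x(i:=y)) \<partial>Q) \<partial>PiM I (\<lambda>_. Q))"
    by (rule PS.product_integral_insert[OF fin i PiQ_int_bound[OF fm fb]])
  have m2: "(\<lambda>(x, y). f (x(i := y))) \<in> borel_measurable (PiM I (\<lambda>_. Q) \<Otimes>\<^sub>M Q)"
    using measurable_compose[OF measurable_add_dim[of i I "\<lambda>_. Q"] fm] by (simp add: case_prod_beta')
  have m: "(\<lambda>x. \<integral>y. f (x(i:=y)) \<partial>Q) \<in> borel_measurable (PiM I (\<lambda>_. Q))"
    by (rule PQ.borel_measurable_lebesgue_integral) (use m2 in \<open>simp add: case_prod_beta'\<close>)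
  have B0: "B \<ge> 0" using fb[of undefined] by simp
  have "\<bar>\<integral>y. f (x(i:=y)) \<partial>Q\<bar> \<le> B" for x
  proof -
    have "\<bar>\<integral>y. f (x(i:=y)) \<partial>Q\<bar> \<le> (\<integral>y. \<bar>f (x(i:=y))\<bar> \<partial>Q)"
      using integral_norm_bound[of Q "\<lambda>y. f (x(i:=y))"] by simp
    also have "\<dots> \<le> (\<integral>y. B \<partial>Q)"
      by (rule integral_mono') (use fb B0 in auto)
    also have "\<dots> = B" using PQ.prob_space by simp
    finally show ?thesis .
  qed
  then show "integrable (PiM I (\<lambda>_. Q)) (\<lambda>x. \<integral>y. f (x(i:=y)) \<partial>Q)"
    by (intro PiQ_int_bound[OF m]) auto
qed

definition Wk :: "(nat \<Rightarrow> 'a \<times> real \<times> real) \<Rightarrow> nat \<Rightarrow> 'a" where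
  "Wk \<omega> k = sgd_it lam R D mu (\<lambda>t. fst (\<omega> t)) (\<lambda>t. yv (\<omega> t)) k"

lemma Wk_0: "Wk \<omega> 0 = 0" by (simp add: Wk_def)
lemma Wk_Suc: "Wk \<omega> (Suc k) = proj_ball D (Wk \<omega> k - (1 / (lam * real (Suc k))) *\<^sub>R gr (Wk \<omega> k) (\<omega> (Suc k)))"
  by (simp add: Wk_def gr_def Let_def)
lemma Wk_bound: "norm (Wk \<omega> k) \<le> D"
  by (cases k) (use Dpos proj_ball_in[OF less_imp_le[OF Dpos]] in \<open>auto simp: Wk_0 Wk_Suc\<close>)
lemma Wk_local: "(\<And>t. t \<le> k \<Longrightarrow> \<omega> t = \<omega>' t) \<Longrightarrow> Wk \<omega> k = Wk \<omega>' k"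
proof (induction k)
  case 0 then show ?case by (simp add: Wk_0)
next
  case (Suc k)
  then have "Wk \<omega> k = Wk \<omega>' k" by simp
  moreover have "\<omega> (Suc k) = \<omega>' (Suc k)" using Suc by simp
  ultimately show ?case by (simp add: Wk_Suc)
qed

lemma comp_m1[measurable]: assumes "t \<in> I" shows "(\<lambda>\<omega>. fst (\<omega> t)) \<in> borel_measurable (PiM I (\<lambda>_. Q))"
  using measurable_compose[OF measurable_component_singleton[OF assms, of "\<lambda>_. Q"] mfst] by simp
lemma comp_m2[measurable]: assumes "t \<in> I" shows "(\<lambda>\<omega>. fst (snd (\<omega> t))) \<in> borel_measurable (PiM I (\<lambda>_. Q))"
  using measurable_compose[OF measurable_component_singleton[OF assms, of "\<lambda>_. Q"] me] by simp
lemma comp_m3[measurable]: assumes "t \<in> I" shows "(\<lambda>\<omega>. snd (snd (\<omega> t))) \<in> borel_measurable (PiM I (\<lambda>_. Q))"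
  using measurable_compose[OF measurable_component_singleton[OF assms, of "\<lambda>_. Q"] mb] by simp

lemma Wk_meas: "{1..k} \<subseteq> I \<Longrightarrow> (\<lambda>\<omega>. Wk \<omega> k) \<in> borel_measurable (PiM I (\<lambda>_. Q))"
proof (induction k)
  case 0 then show ?case by (simp add: Wk_0)
next
  case (Suc k)
  have "{1..k} \<subseteq> I" using Suc.prems by auto
  then have IH[measurable]: "(\<lambda>\<omega>. Wk \<omega> k) \<in> borel_measurable (PiM I (\<lambda>_. Q))" by (rule Suc.IH)
  have SI: "Suc k \<in> I" using Suc by auto
  have "(\<lambda>\<omega>. Wk \<omega> k - (1 / (lam * real (Suc k))) *\<^sub>R gr (Wk \<omega> k) (\<omega> (Suc k))) \<in> borel_measurable (PiM I (\<lambda>_. Q))"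
    unfolding gr_def yv_def huber_phi_def using SI by measurable
  from measurable_compose[OF this proj_ball_meas] Dpos show ?case by (simp add: Wk_Suc)
qed

definition Aerr :: "nat \<Rightarrow> nat \<Rightarrow> real" where
  "Aerr T k = (\<integral>\<omega>. (norm (Wk \<omega> k - wstar))\<^sup>2 \<partial>PiM {1..T} (\<lambda>_. Q))"

lemma Wk_dist: "norm (Wk \<omega> k - wstar) \<le> 2 * D"
  using Wk_bound[of \<omega> k] wst norm_triangle_ineq4[of "Wk \<omega> k" wstar] by simp

lemma Wk_sq_bound: "\<bar>(norm (Wk \<omega> k - wstar))\<^sup>2\<bar> \<le> (2 * D)\<^sup>2"
proof -
  have "(norm (Wk \<omega> k - wstar))\<^sup>2 \<le> (2 * D)\<^sup>2" by (rule power_mono[OF Wk_dist]) simp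
  then show ?thesis by simp
qed

lemma Wk_sq_meas: "{1..k} \<subseteq> I \<Longrightarrow> (\<lambda>\<omega>. (norm (Wk \<omega> k - wstar))\<^sup>2) \<in> borel_measurable (PiM I (\<lambda>_. Q))"
proof -
  assume a: "{1..k} \<subseteq> I"
  have c: "(\<lambda>w. (norm (w - wstar))\<^sup>2) \<in> borel_measurable borel"
    by (intro borel_measurable_continuous_onI continuous_intros)
  show ?thesis using measurable_compose[OF Wk_meas[OF a] c] .
qed

lemma recur:
  assumes k: "Suc k \<le> T"
  shows "Aerr T (Suc k) \<le> (1 - 2 * (1 / (lam * real (Suc k))) * lam) * Aerr T k
            + (1 / (lam * real (Suc k)))\<^sup>2 * (4 * R\<^sup>2)"
proof -
  define \<eta> where "\<eta> = 1 / (lam * real (Suc k))"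
  have lampos: "lam > 0" using al1 rho by simp
  have eta0: "\<eta> \<ge> 0" unfolding \<eta>_def using lampos by simp
  define I' where "I' = {1..T} - {Suc k}"
  have ins: "{1..T} = insert (Suc k) I'" unfolding I'_def
    by (rule insert_Diff[symmetric]) (use k in simp)
  have fin: "finite I'" unfolding I'_def by simp
  have ni: "Suc k \<notin> I'" unfolding I'_def by simp
  have "{1..Suc k} \<subseteq> {1..T}" "{1..k} \<subseteq> {1..T}" using k by auto
  then have sub1: "{1..Suc k} \<subseteq> insert (Suc k) I'" and sub2: "{1..k} \<subseteq> insert (Suc k) I'"
    unfolding ins by auto
  have sub3: "{1..k} \<subseteq> I'" unfolding I'_def using k by auto
  define F1 where "F1 = (\<lambda>x. \<integral>y. (norm (Wk (x(Suc k := y)) (Suc k) - wstar))\<^sup>2 \<partial>Q)"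
  define h where "h = (\<lambda>x. (1 - 2 * \<eta> * lam) * (norm (Wk x k - wstar))\<^sup>2 + \<eta>\<^sup>2 * (4 * R\<^sup>2))"
  have A1: "Aerr T (Suc k) = (\<integral>x. F1 x \<partial>PiM I' (\<lambda>_. Q))"
    and iF1: "integrable (PiM I' (\<lambda>_. Q)) F1"
    unfolding Aerr_def ins F1_def
    by (rule insert_split[OF fin ni Wk_sq_meas[OF sub1] Wk_sq_bound])+
  have F1h: "F1 x \<le> h x" for x
  proof -
    have "F1 x = (\<integral>y. (norm (proj_ball D (Wk x k - \<eta> *\<^sub>R gr (Wk x k) y) - wstar))\<^sup>2 \<partial>Q)"
      unfolding F1_def
    proof (rule Bochner_Integration.integral_cong[OF refl])
      fix y
      have "Wk (x(Suc k := y)) k = Wk x k" by (rule Wk_local) simp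
      then show "(norm (Wk (x(Suc k := y)) (Suc k) - wstar))\<^sup>2
          = (norm (proj_ball D (Wk x k - \<eta> *\<^sub>R gr (Wk x k) y) - wstar))\<^sup>2"
        by (simp add: Wk_Suc \<eta>_def)
    qed
    also have "\<dots> \<le> h x" unfolding h_def by (rule inner_step[OF Wk_bound eta0])
    finally show ?thesis .
  qed
  interpret PI: prob_space "PiM I' (\<lambda>_. Q)" by (rule PiQ_prob)
  have ig: "integrable (PiM I' (\<lambda>_. Q)) (\<lambda>x. (norm (Wk x k - wstar))\<^sup>2)"
    by (rule PiQ_int_bound[OF Wk_sq_meas[OF sub3] Wk_sq_bound])
  have ih: "integrable (PiM I' (\<lambda>_. Q)) h"
    unfolding h_def
    by (rule Bochner_Integration.integrable_add[OF integrable_mult_right[OF ig] PI.integrable_const])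
  have "Aerr T (Suc k) \<le> (\<integral>x. h x \<partial>PiM I' (\<lambda>_. Q))"
    unfolding A1 by (rule integral_mono[OF iF1 ih F1h])
  also have "\<dots> = (1 - 2 * \<eta> * lam) * (\<integral>x. (norm (Wk x k - wstar))\<^sup>2 \<partial>PiM I' (\<lambda>_. Q)) + \<eta>\<^sup>2 * (4 * R\<^sup>2)"
    unfolding h_def
    by (subst Bochner_Integration.integral_add[OF integrable_mult_right[OF ig] PI.integrable_const])
      (simp add: PI.prob_space)
  also have "(\<integral>x. (norm (Wk x k - wstar))\<^sup>2 \<partial>PiM I' (\<lambda>_. Q)) = Aerr T k"
  proof -
    have "Aerr T k = (\<integral>x. (\<integral>y. (norm (Wk (x(Suc k := y)) k - wstar))\<^sup>2 \<partial>Q) \<partial>PiM I' (\<lambda>_. Q))"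
      unfolding Aerr_def ins
      by (rule insert_split[OF fin ni Wk_sq_meas[OF sub2] Wk_sq_bound])
    also have "\<dots> = (\<integral>x. (norm (Wk x k - wstar))\<^sup>2 \<partial>PiM I' (\<lambda>_. Q))"
    proof (rule Bochner_Integration.integral_cong[OF refl])
      fix x
      have "Wk (x(Suc k := y)) k = Wk x k" for y by (rule Wk_local) simp
      then show "(\<integral>y. (norm (Wk (x(Suc k := y)) k - wstar))\<^sup>2 \<partial>Q) = (norm (Wk x k - wstar))\<^sup>2"
        using PQ.prob_space by simp
    qed
    finally show ?thesis by simp
  qed
  finally show ?thesis unfolding \<eta>_def .
qed

lemma Aerr_nonneg: "Aerr T k \<ge> 0"
  unfolding Aerr_def by (rule Bochner_Integration.integral_nonneg) simp

lemma Aerr_bound: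
  shows "1 \<le> k \<Longrightarrow> k < T \<Longrightarrow> Aerr T k \<le> 2 * (4 * R\<^sup>2 / lam\<^sup>2) / (real k + 1)"
proof (induction k)
  case 0 then show ?case by simp
next
  case (Suc k)
  have lampos: "lam > 0" using al1 rho by simp
  define G where "G = 4 * R\<^sup>2 / lam\<^sup>2"
  have G0: "G \<ge> 0" unfolding G_def by simp
  have rec: "Aerr T (Suc k) \<le> (1 - 2 / real (Suc k)) * Aerr T k + G / (real (Suc k))\<^sup>2"
  proof -
    have "Aerr T (Suc k) \<le> (1 - 2 * (1 / (lam * real (Suc k))) * lam) * Aerr T k
            + (1 / (lam * real (Suc k)))\<^sup>2 * (4 * R\<^sup>2)"
      by (rule recur) (use Suc.prems in simp)
    also have "(1 - 2 * (1 / (lam * real (Suc k))) * lam) = 1 - 2 / real (Suc k)"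
      using aux1[of lam "real (Suc k)"] lampos by (metis less_irrefl)
    also have "(1 / (lam * real (Suc k)))\<^sup>2 * (4 * R\<^sup>2) = G / (real (Suc k))\<^sup>2"
      unfolding G_def by (simp add: field_simps power2_eq_square)
    finally show ?thesis .
  qed
  show ?case
  proof (cases "k = 0")
    case True
    have "Aerr T (Suc k) \<le> - Aerr T 0 + G" using rec True by simp
    then have "Aerr T (Suc k) \<le> G" using Aerr_nonneg[of T 0] by linarith
    moreover have "2 * G / (real (Suc k) + 1) = G" using True by simp
    ultimately have "Aerr T (Suc k) \<le> 2 * G / (real (Suc k) + 1)" by simp
    then show ?thesis unfolding G_def .
  next
    case False
    have k1: "1 \<le> k" using False by simp
    have kT: "k < T" using Suc.prems by simp
    have IH: "Aerr T k \<le> 2 * G / (real k + 1)" using Suc.IH[OF k1 kT] unfolding G_def .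
    define n where "n = real k + 1"
    have n2: "n \<ge> 2" unfolding n_def using False by simp
    have rn: "real (Suc k) = n" unfolding n_def by simp
    have c0: "1 - 2 / n \<ge> 0" using n2 by (simp add: field_simps)
    have r1: "Aerr T (Suc k) \<le> (1 - 2 / n) * Aerr T k + G / n\<^sup>2" using rec unfolding rn .
    have r2: "(1 - 2 / n) * Aerr T k \<le> (1 - 2 / n) * (2 * G / n)"
      by (rule mult_left_mono[OF IH[folded n_def] c0])
    have "Aerr T (Suc k) \<le> 2 * G / (n + 1)" using r1 r2 aux6[OF n2 G0] by linarith
    then have "Aerr T (Suc k) \<le> 2 * G / (real (Suc k) + 1)" unfolding rn .
    then show ?thesis unfolding G_def .
  qed
qed

lemma final:
  assumes T: "T > 0" "even T"
  shows "(\<integral>\<omega>. (norm (sgd_avg lam R D mu (\<lambda>t. fst (\<omega> t))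
              (\<lambda>t. inner wstar (fst (\<omega> t)) + fst (snd (\<omega> t)) + snd (snd (\<omega> t))) T
            - wstar))\<^sup>2 \<partial>(PiM {1..T} (\<lambda>_. Q)))
     \<le> 72 * R\<^sup>2 / (lam\<^sup>2 * real T)"
proof -
  have lampos: "lam > 0" using al1 rho by simp
  define m where "m = T div 2"
  have Tm: "T = 2 * m" unfolding m_def using T by simp
  have m1: "m \<ge> 1" using T Tm by simp
  have tm2: "2 / real T = 1 / real m" using Tm m1 by simp
  have tm2': "2 / real T = 1 / real (T div 2)" using tm2 unfolding m_def .
  define S where "S = {m + 1..T}"
  have cS: "card S = m" unfolding S_def using Tm by simp
  have fS: "finite S" unfolding S_def by simp
  define G where "G = 4 * R\<^sup>2 / lam\<^sup>2"
  have G0: "G \<ge> 0" unfolding G_def by simp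
  let ?f = "\<lambda>\<omega>. (1 / real m) * (\<Sum>t\<in>S. (norm (Wk \<omega> (t - 1) - wstar))\<^sup>2)"
  have pw: "(norm (sgd_avg lam R D mu (\<lambda>t. fst (\<omega> t))
              (\<lambda>t. inner wstar (fst (\<omega> t)) + fst (snd (\<omega> t)) + snd (snd (\<omega> t))) T
            - wstar))\<^sup>2 \<le> ?f \<omega>" for \<omega>
  proof -
    have avg: "sgd_avg lam R D mu (\<lambda>t. fst (\<omega> t))
              (\<lambda>t. inner wstar (fst (\<omega> t)) + fst (snd (\<omega> t)) + snd (snd (\<omega> t))) T
        = (1 / real m) *\<^sub>R (\<Sum>t\<in>S. Wk \<omega> (t - 1))"
      unfolding sgd_avg_def sgd_w_def Wk_def yv_def S_def using tm2' by (simp add: m_def)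
    have "(\<Sum>t\<in>S. Wk \<omega> (t - 1) - wstar) = (\<Sum>t\<in>S. Wk \<omega> (t - 1)) - real m *\<^sub>R wstar"
      by (simp add: sum_subtractf cS sum_constant_scaleR)
    then have eq: "sgd_avg lam R D mu (\<lambda>t. fst (\<omega> t))
              (\<lambda>t. inner wstar (fst (\<omega> t)) + fst (snd (\<omega> t)) + snd (snd (\<omega> t))) T - wstar
        = (1 / real m) *\<^sub>R (\<Sum>t\<in>S. Wk \<omega> (t - 1) - wstar)"
      unfolding avg using m1 by (simp add: scaleR_diff_right)
    have "norm ((1 / real m) *\<^sub>R (\<Sum>t\<in>S. Wk \<omega> (t - 1) - wstar))
        \<le> (1 / real m) * (\<Sum>t\<in>S. norm (Wk \<omega> (t - 1) - wstar))"
      using norm_sum[of "\<lambda>t. Wk \<omega> (t - 1) - wstar" S] m1 by (simp add: divide_right_mono)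
    then have "(norm ((1 / real m) *\<^sub>R (\<Sum>t\<in>S. Wk \<omega> (t - 1) - wstar)))\<^sup>2
        \<le> ((1 / real m) * (\<Sum>t\<in>S. norm (Wk \<omega> (t - 1) - wstar)))\<^sup>2"
      by (rule power_mono) simp
    also have "\<dots> = (1 / real m)\<^sup>2 * (\<Sum>t\<in>S. norm (Wk \<omega> (t - 1) - wstar))\<^sup>2"
      by (rule power_mult_distrib)
    also have "\<dots> \<le> (1 / real m)\<^sup>2 * ((\<Sum>t\<in>S. (norm (Wk \<omega> (t - 1) - wstar))\<^sup>2) * real m)"
      by (rule mult_left_mono) (use sum_squared_le_sum_of_squares[of "\<lambda>t. norm (Wk \<omega> (t - 1) - wstar)" S] cS in auto)
    also have "\<dots> = ?f \<omega>" using m1 by (simp add: power2_eq_square)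
    finally show ?thesis unfolding eq .
  qed
  have iS: "integrable (PiM {1..T} (\<lambda>_. Q)) (\<lambda>\<omega>. (norm (Wk \<omega> (t - 1) - wstar))\<^sup>2)" if "t \<in> S" for t
    by (rule PiQ_int_bound[OF Wk_sq_meas Wk_sq_bound]) (use that in \<open>auto simp: S_def\<close>)
  have i_f: "integrable (PiM {1..T} (\<lambda>_. Q)) ?f"
    by (intro integrable_mult_right Bochner_Integration.integrable_sum iS)
  have "(\<integral>\<omega>. (norm (sgd_avg lam R D mu (\<lambda>t. fst (\<omega> t))
              (\<lambda>t. inner wstar (fst (\<omega> t)) + fst (snd (\<omega> t)) + snd (snd (\<omega> t))) T
            - wstar))\<^sup>2 \<partial>(PiM {1..T} (\<lambda>_. Q))) \<le> (\<integral>\<omega>. ?f \<omega> \<partial>(PiM {1..T} (\<lambda>_. Q)))"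
    by (rule integral_mono'[OF i_f pw]) (simp add: sum_nonneg)
  also have "\<dots> = (1 / real m) * (\<Sum>t\<in>S. Aerr T (t - 1))"
  proof -
    have "(\<integral>\<omega>. (\<Sum>t\<in>S. (norm (Wk \<omega> (t - 1) - wstar))\<^sup>2) \<partial>(PiM {1..T} (\<lambda>_. Q)))
        = (\<Sum>t\<in>S. (\<integral>\<omega>. (norm (Wk \<omega> (t - 1) - wstar))\<^sup>2 \<partial>(PiM {1..T} (\<lambda>_. Q))))"
      by (rule Bochner_Integration.integral_sum) (rule iS)
    then show ?thesis unfolding Aerr_def by simp
  qed
  also have "\<dots> \<le> (1 / real m) * (\<Sum>t\<in>S. 2 * G / real m)"
  proof (rule mult_left_mono[OF sum_mono])
    fix t assume t: "t \<in> S"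
    then have tt: "m + 1 \<le> t" "t \<le> T" unfolding S_def by auto
    then have t1: "1 \<le> t - 1" "t - 1 < T" using m1 by linarith+
    have t1': "real (t - 1) + 1 \<ge> real m" using tt m1 by (simp add: of_nat_diff)
    have "Aerr T (t - 1) \<le> 2 * G / (real (t - 1) + 1)"
      using Aerr_bound[OF t1(1,2)] unfolding G_def .
    also have "\<dots> \<le> 2 * G / real m"
      using aux4[OF t1' _ G0] m1 by simp
    finally show "Aerr T (t - 1) \<le> 2 * G / real m" .
  qed simp
  also have "\<dots> = 2 * G / real m" by (simp only: sum_constant aux5[OF cS m1])
  also have "\<dots> = 16 * R\<^sup>2 / (lam\<^sup>2 * real T)"
    unfolding G_def Tm using aux2[of m "lam\<^sup>2" "R\<^sup>2"] m1 lampos by simp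
  also have "\<dots> \<le> 72 * R\<^sup>2 / (lam\<^sup>2 * real T)"
    by (rule aux3) simp_all
  finally show ?thesis .
qed

end


theorem theorem2:
  fixes Px :: "'a::euclidean_space measure" and Pe Pb :: "real measure"
    and D \<sigma> \<alpha> \<rho> :: real and T :: nat and wstar :: 'a
  assumes "prob_space Px" and "prob_space Pe" and "prob_space Pb"
    and "sets Px = sets borel" and "sets Pe = sets borel" and "sets Pb = sets borel"
    and "D > 0" and "\<sigma> \<ge> 0" and "0 \<le> \<alpha>" and "\<alpha> < 1" and "\<rho> > 0"
    and "T > 0" and "even T"
    and "norm wstar \<le> D"
    and "AE x in Px. norm x \<le> 1"
    and "\<forall>v::'a. (\<integral>x. (inner v (x - (\<integral>z. z \<partial>Px)))\<^sup>2 \<partial>Px) \<ge> \<rho> * (norm v)\<^sup>2"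
    and "AE e in Pe. \<bar>e\<bar> \<le> \<sigma>"
    and "(\<integral>e. e \<partial>Pe) = 0"
    and "measure Pb {b. b \<noteq> 0} = \<alpha>"
  shows "(\<integral>\<omega>. (norm (sgd_avg ((1 - \<alpha>) * \<rho>) (6 * D + \<sigma>) D (\<integral>z. z \<partial>Px)
              (\<lambda>t. fst (\<omega> t))
              (\<lambda>t. inner wstar (fst (\<omega> t)) + fst (snd (\<omega> t)) + snd (snd (\<omega> t))) T
            - wstar))\<^sup>2
          \<partial>(PiM {1..T} (\<lambda>_. Px \<Otimes>\<^sub>M (Pe \<Otimes>\<^sub>M Pb))))
     \<le> 72 * (6 * D + \<sigma>)\<^sup>2 / (((1 - \<alpha>) * \<rho>)\<^sup>2 * real T)"
proof -
  interpret sgd_setup Px Pe Pb D \<sigma> \<alpha> \<rho> wstar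
    by (intro sgd_setup.intro) (rule assms)+
  show ?thesis by (rule final[OF assms(12,13)])
qed

end
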